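(* Let $(\Omega,\Sigma,\mu)$ and $(\Delta,\Gamma,\nu)$ be $\sigma$-finite measure spaces, let $X_1(\mu),X_2(\mu)$ be saturated Banach function spaces over $\mu$ and $Y_1(\nu),Y_2(\nu)$ saturated Banach function spaces over $\nu$, and let $T\colon X_1(\mu)\to Y_1(\nu)$ and $S\colon X_2(\mu)\to Y_2(\nu)$ be nontrivial continuous linear operators. Assume that $Y_2^{Y_1''}$ is saturated and let $h\in X_1^{X_2}$. The following are equivalent: (a) There exists a constant $C>0$ such that $$\sum_{i=1}^n\int T(x_i)y_i'\,d\nu\le C\Big\Vert\sum_{i=1}^nS(hx_i)y_i'\Big\Vert_{Y_2\pi Y_1'}$$ for every $n\in\mathbb{N}$, all $x_1,\dots,x_n\in X_1(\mu)$ and all $y_1',\dots,y_n'\in Y_1(\nu)'$. (b) There exists $\xi^*\in(Y_2\pi Y_1')^*$ such that $\eta(T(x))=R_{\xi^*}(S(hx))$ for all $x\in X_1(\mu)$, where $\eta\colon Y_1(\nu)''\to (Y_1(\nu)')^*$ is given by $\langle\eta(f),y'\rangle=\int fy'\,d\nu$ (and $T(x)\in Y_1(\nu)\subset Y_1(\nu)''$), and $R_{\xi^*}\colon Y_2(\nu)\to (Y_1(\nu)')^*$ is the continuous linear operator defined by $\langle R_{\xi^*}(y_2),y_1'\rangle=\langle\xi^*,y_2y_1'\rangle$ for $y_2\in Y_2(\nu)$, $y_1'\in Y_1(\nu)'$.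
   Context: $L^0(\mu)$ denotes the space of ($\mu$-a.e. classes of) measurable real functions. A Banach function space $X(\mu)$ is a Banach space $X(\mu)\subset L^0(\mu)$ with norm $\Vert\cdot\Vert_X$ such that if $f\in L^0(\mu)$, $g\in X(\mu)$ and $|f|\le|g|$ $\mu$-a.e., then $f\in X(\mu)$ and $\Vert f\Vert_X\le\Vert g\Vert_X$. It is saturated if there is no $A\in\Sigma$ with $\mu(A)>0$ and $f\chi_A=0$ a.e. for all $f\in X(\mu)$. For Banach function spaces $X(\mu),Y(\mu)$, the $Y$-dual is $X^Y=\{h\in L^0(\mu): fh\in Y(\mu)\ \forall f\in X(\mu)\}$ with norm $\Vert h\Vert_{X^Y}=\sup_{f\in B_X}\Vert hf\Vert_Y$; the Köthe dual is $X(\mu)'=X^{L^1(\mu)}$ and the Köthe bidual is $X(\mu)''=(X(\mu)')'$ (a saturated $X(\mu)$ is contained in $X(\mu)''$). The $\pi$-product space $X\pi Y$ consists of all $h\in L^0(\mu)$ with $|h|\le\sum_n|f_ng_n|$ a.e. for some $(f_n)\subset X(\mu)$, $(g_n)\subset Y(\mu)$ with $\sum_n\Vert f_n\Vert_X\Vert g_n\Vert_Y<\infty$, normed by $\pi(h)=\inf\sum_n\Vert f_n\Vert_X\Vert g_n\Vert_Y$ over all such representations; $(Y_2\pi Y_1')^*$ is its topological dual. $B_X$ is the closed unit ball. *)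

theory Defs
  imports "HOL-Analysis.Analysis"
begin

text \<open>Functions are represented by representatives; all notions below are invariant
under a.e. equality. A function space is given by a carrier set of real functions
together with a norm.\<close>

definition bfs :: "'a measure \<Rightarrow> ('a \<Rightarrow> real) set \<Rightarrow> (('a \<Rightarrow> real) \<Rightarrow> real) \<Rightarrow> bool" where
  "bfs M X n \<longleftrightarrow>
     X \<subseteq> borel_measurable M \<and>
     (\<lambda>_. 0) \<in> X \<and>
     (\<forall>f\<in>X. \<forall>g\<in>X. (\<lambda>x. f x + g x) \<in> X \<and> n (\<lambda>x. f x + g x) \<le> n f + n g) \<and>
     (\<forall>f\<in>X. \<forall>c::real. (\<lambda>x. c * f x) \<in> X \<and> n (\<lambda>x. c * f x) = \<bar>c\<bar> * n f) \<and>
     (\<forall>f\<in>X. n f = 0 \<longleftrightarrow> (AE x in M. f x = 0)) \<and>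
     (\<forall>f g. f \<in> borel_measurable M \<longrightarrow> g \<in> X \<longrightarrow> (AE x in M. \<bar>f x\<bar> \<le> \<bar>g x\<bar>)
        \<longrightarrow> f \<in> X \<and> n f \<le> n g) \<and>
     (\<forall>F. (\<forall>k. F k \<in> X) \<longrightarrow>
        (\<forall>e>0. \<exists>K. \<forall>i\<ge>K. \<forall>j\<ge>K. n (\<lambda>x. F i x - F j x) < e) \<longrightarrow>
        (\<exists>f\<in>X. (\<lambda>k. n (\<lambda>x. F k x - f x)) \<longlonglongrightarrow> 0))"

definition saturated :: "'a measure \<Rightarrow> ('a \<Rightarrow> real) set \<Rightarrow> bool" where
  "saturated M X \<longleftrightarrow>
     \<not> (\<exists>A\<in>sets M. emeasure M A > 0 \<and> (\<forall>f\<in>X. AE x in M. f x * indicator A x = 0))"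

definition ydual :: "'a measure \<Rightarrow> ('a \<Rightarrow> real) set \<Rightarrow> ('a \<Rightarrow> real) set \<Rightarrow> ('a \<Rightarrow> real) set" where
  "ydual M X Y = {h \<in> borel_measurable M. \<forall>f\<in>X. (\<lambda>x. h x * f x) \<in> Y}"

definition ydual_norm :: "('a \<Rightarrow> real) set \<Rightarrow> (('a \<Rightarrow> real) \<Rightarrow> real) \<Rightarrow> (('a \<Rightarrow> real) \<Rightarrow> real)
    \<Rightarrow> ('a \<Rightarrow> real) \<Rightarrow> real" where
  "ydual_norm X nX nY h = (SUP f\<in>{f\<in>X. nX f \<le> 1}. nY (\<lambda>x. h x * f x))"

definition L1set :: "'a measure \<Rightarrow> ('a \<Rightarrow> real) set" where
  "L1set M = {f \<in> borel_measurable M. integrable M f}"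

definition L1norm :: "'a measure \<Rightarrow> ('a \<Rightarrow> real) \<Rightarrow> real" where
  "L1norm M f = (\<integral>x. \<bar>f x\<bar> \<partial>M)"

definition kothe :: "'a measure \<Rightarrow> ('a \<Rightarrow> real) set \<Rightarrow> ('a \<Rightarrow> real) set" where
  "kothe M X = ydual M X (L1set M)"

definition kothe_norm :: "'a measure \<Rightarrow> ('a \<Rightarrow> real) set \<Rightarrow> (('a \<Rightarrow> real) \<Rightarrow> real)
    \<Rightarrow> ('a \<Rightarrow> real) \<Rightarrow> real" where
  "kothe_norm M X nX = ydual_norm X nX (L1norm M)"

definition pi_rep :: "'a measure \<Rightarrow> ('a \<Rightarrow> real) set \<Rightarrow> (('a \<Rightarrow> real) \<Rightarrow> real)
    \<Rightarrow> ('a \<Rightarrow> real) set \<Rightarrow> (('a \<Rightarrow> real) \<Rightarrow> real) \<Rightarrow> ('a \<Rightarrow> real)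
    \<Rightarrow> (nat \<Rightarrow> 'a \<Rightarrow> real) \<Rightarrow> (nat \<Rightarrow> 'a \<Rightarrow> real) \<Rightarrow> bool" where
  "pi_rep M X nX Y nY h f g \<longleftrightarrow>
     (\<forall>k. f k \<in> X) \<and> (\<forall>k. g k \<in> Y) \<and> summable (\<lambda>k. nX (f k) * nY (g k)) \<and>
     (AE x in M. ennreal \<bar>h x\<bar> \<le> (\<Sum>k. ennreal \<bar>f k x * g k x\<bar>))"

definition pi_set :: "'a measure \<Rightarrow> ('a \<Rightarrow> real) set \<Rightarrow> (('a \<Rightarrow> real) \<Rightarrow> real)
    \<Rightarrow> ('a \<Rightarrow> real) set \<Rightarrow> (('a \<Rightarrow> real) \<Rightarrow> real) \<Rightarrow> ('a \<Rightarrow> real) set" where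
  "pi_set M X nX Y nY = {h \<in> borel_measurable M. \<exists>f g. pi_rep M X nX Y nY h f g}"

definition pi_norm :: "'a measure \<Rightarrow> ('a \<Rightarrow> real) set \<Rightarrow> (('a \<Rightarrow> real) \<Rightarrow> real)
    \<Rightarrow> ('a \<Rightarrow> real) set \<Rightarrow> (('a \<Rightarrow> real) \<Rightarrow> real) \<Rightarrow> ('a \<Rightarrow> real) \<Rightarrow> real" where
  "pi_norm M X nX Y nY h =
     Inf {(\<Sum>k. nX (f k) * nY (g k)) | f g. pi_rep M X nX Y nY h f g}"

definition pi_dual :: "'a measure \<Rightarrow> ('a \<Rightarrow> real) set \<Rightarrow> (('a \<Rightarrow> real) \<Rightarrow> real)
    \<Rightarrow> ('a \<Rightarrow> real) set \<Rightarrow> (('a \<Rightarrow> real) \<Rightarrow> real) \<Rightarrow> (('a \<Rightarrow> real) \<Rightarrow> real) \<Rightarrow> bool" where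
  "pi_dual M X nX Y nY \<xi> \<longleftrightarrow>
     (\<forall>f\<in>pi_set M X nX Y nY. \<forall>g\<in>pi_set M X nX Y nY. \<forall>a b.
        \<xi> (\<lambda>x. a * f x + b * g x) = a * \<xi> f + b * \<xi> g) \<and>
     (\<exists>K. \<forall>f\<in>pi_set M X nX Y nY. \<bar>\<xi> f\<bar> \<le> K * pi_norm M X nX Y nY f)"

definition bfs_op :: "'a measure \<Rightarrow> ('a \<Rightarrow> real) set \<Rightarrow> (('a \<Rightarrow> real) \<Rightarrow> real)
    \<Rightarrow> 'b measure \<Rightarrow> ('b \<Rightarrow> real) set \<Rightarrow> (('b \<Rightarrow> real) \<Rightarrow> real)
    \<Rightarrow> (('a \<Rightarrow> real) \<Rightarrow> ('b \<Rightarrow> real)) \<Rightarrow> bool" where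
  "bfs_op M X nX N Y nY T \<longleftrightarrow>
     (\<forall>f\<in>X. T f \<in> Y) \<and>
     (\<forall>f\<in>X. \<forall>g\<in>X. \<forall>a b. AE y in N. T (\<lambda>x. a * f x + b * g x) y = a * T f y + b * T g y) \<and>
     (\<exists>K. \<forall>f\<in>X. nY (T f) \<le> K * nX f)"

definition nontrivial_op :: "'b measure \<Rightarrow> ('a \<Rightarrow> real) set \<Rightarrow> (('a \<Rightarrow> real) \<Rightarrow> ('b \<Rightarrow> real)) \<Rightarrow> bool" where
  "nontrivial_op N X T \<longleftrightarrow> (\<exists>f\<in>X. \<not> (AE y in N. T f y = 0))"

end

theory Submission
  imports Defs
begin


definition lingraph :: "('b \<Rightarrow> real) set \<Rightarrow> (('b \<Rightarrow> real) \<Rightarrow> real) \<Rightarrow> (('b \<Rightarrow> real) \<times> real) set \<Rightarrow> bool" where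
  "lingraph V p G \<longleftrightarrow> G \<subseteq> V \<times> UNIV \<and> ((\<lambda>_. 0), 0) \<in> G \<and>
     (\<forall>f a g b \<alpha> \<beta>. (f,a)\<in>G \<longrightarrow> (g,b)\<in>G \<longrightarrow> ((\<lambda>x. \<alpha>*f x + \<beta>*g x), \<alpha>*a+\<beta>*b) \<in> G) \<and>
     (\<forall>f a b. (f,a)\<in>G \<longrightarrow> (f,b)\<in>G \<longrightarrow> a=b) \<and> (\<forall>f a. (f,a)\<in>G \<longrightarrow> a \<le> p f)"

lemma lg_lin: "lingraph V p G \<Longrightarrow> (f,a)\<in>G \<Longrightarrow> (g,b)\<in>G \<Longrightarrow> ((\<lambda>x. \<alpha>*f x + \<beta>*g x), \<alpha>*a+\<beta>*b) \<in> G"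
  unfolding lingraph_def by blast

lemma lg_fun: "lingraph V p G \<Longrightarrow> (f,a)\<in>G \<Longrightarrow> (f,b)\<in>G \<Longrightarrow> a = b"
  unfolding lingraph_def by blast

lemma lg_dom: "lingraph V p G \<Longrightarrow> (f,a)\<in>G \<Longrightarrow> a \<le> p f"
  unfolding lingraph_def by blast

lemma lg_V: "lingraph V p G \<Longrightarrow> (f,a)\<in>G \<Longrightarrow> f \<in> V"
  unfolding lingraph_def by blast

lemma lg_zero: "lingraph V p G \<Longrightarrow> ((\<lambda>_. 0), 0) \<in> G"
  unfolding lingraph_def by blast

lemma lg_scale: assumes "lingraph V p G" "(f,a)\<in>G" shows "((\<lambda>x. c*f x), c*a) \<in> G"
proof -
  have "((\<lambda>x. c*f x + 0*f x), c*a+0*a) \<in> G" using lg_lin[OF assms assms(2)] .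
  then show ?thesis by simp
qed

lemma lg_add: assumes "lingraph V p G" "(f,a)\<in>G" "(g,b)\<in>G" shows "((\<lambda>x. f x + g x), a+b) \<in> G"
proof -
  have "((\<lambda>x. 1*f x + 1*g x), 1*a+1*b) \<in> G" using lg_lin[OF assms] .
  then show ?thesis by simp
qed

lemma hb_ext:
  fixes V :: "('b \<Rightarrow> real) set"
  assumes V: "\<And>f g a b. f\<in>V \<Longrightarrow> g\<in>V \<Longrightarrow> (\<lambda>x. a*f x + b*g x) \<in> V"
    and sub: "\<And>f g. f\<in>V \<Longrightarrow> g\<in>V \<Longrightarrow> p (\<lambda>x. f x + g x) \<le> p f + p g"
    and hom: "\<And>f c. f\<in>V \<Longrightarrow> c \<ge> 0 \<Longrightarrow> p (\<lambda>x. c * f x) = c * p f"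
    and M: "lingraph V p M" and x0: "x0 \<in> V" "x0 \<notin> fst ` M"
  shows "\<exists>M'. lingraph V p M' \<and> M \<subseteq> M' \<and> M' \<noteq> M"
proof -
  have Vm: "(\<lambda>x. f x - x0 x) \<in> V" if "f \<in> V" for f
    using V[OF that x0(1), of 1 "-1"] by simp
  have Vp: "(\<lambda>x. f x + t * x0 x) \<in> V" if "f \<in> V" for f t
    using V[OF that x0(1), of 1 t] by simp
  have key: "a - p (\<lambda>x. f x - x0 x) \<le> p (\<lambda>x. g x + x0 x) - b" if "(f,a)\<in>M" "(g,b)\<in>M" for f a g b
  proof -
    have fV: "f \<in> V" and gV: "g \<in> V" using lg_V[OF M] that by auto
    have "a + b \<le> p (\<lambda>x. f x + g x)" using lg_dom[OF M lg_add[OF M that]] .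
    also have "(\<lambda>x. f x + g x) = (\<lambda>x. (f x - x0 x) + (g x + x0 x))" by auto
    also have "p \<dots> \<le> p (\<lambda>x. f x - x0 x) + p (\<lambda>x. g x + x0 x)"
      using sub[OF Vm[OF fV] Vp[OF gV, of 1]] by simp
    finally show ?thesis by simp
  qed
  define L where "L = {a - p (\<lambda>x. f x - x0 x) | f a. (f,a)\<in>M}"
  define c where "c = Sup L"
  have z: "((\<lambda>_. 0), 0) \<in> M" using lg_zero[OF M] .
  have Lne: "L \<noteq> {}" using z unfolding L_def by blast
  have Lbdd: "bdd_above L"
    unfolding L_def bdd_above_def using key[OF _ z] by force
  have c_up: "a - p (\<lambda>x. f x - x0 x) \<le> c" if "(f,a)\<in>M" for f a
    unfolding c_def by (rule cSup_upper[OF _ Lbdd]) (use that L_def in blast)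
  have c_low: "c \<le> p (\<lambda>x. g x + x0 x) - b" if "(g,b)\<in>M" for g b
    unfolding c_def by (rule cSup_least[OF Lne]) (use key[OF _ that] L_def in blast)
  define M' where "M' = {((\<lambda>x. f x + t * x0 x), a + t * c) | f a t. (f,a) \<in> M}"
  have inM': "((\<lambda>x. f x + t * x0 x), a + t * c) \<in> M'" if "(f,a)\<in>M" for f a t
    unfolding M'_def using that by blast
  have sub1: "M \<subseteq> M'"
  proof
    fix q assume "q \<in> M"
    then obtain f a where q: "q = (f,a)" "(f,a)\<in>M" by (cases q) auto
    from inM'[OF q(2), of 0] show "q \<in> M'" using q by simp
  qed
  have neq: "M' \<noteq> M"
  proof
    assume "M' = M"
    with inM'[OF z, of 1] have "((\<lambda>x. x0 x), c) \<in> M" by simp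
    then have "x0 \<in> fst ` M" by force
    with x0(2) show False by simp
  qed
  have lg: "lingraph V p M'"
    unfolding lingraph_def
  proof (intro conjI allI impI)
    show "M' \<subseteq> V \<times> UNIV" unfolding M'_def using Vp lg_V[OF M] by blast
    show "((\<lambda>_. 0), 0) \<in> M'" using sub1 z by blast
  next
    fix f a g b \<alpha> \<beta> assume "(f,a)\<in>M'" "(g,b)\<in>M'"
    then obtain f1 a1 t g1 b1 s where f: "f = (\<lambda>x. f1 x + t * x0 x)" "a = a1 + t*c" "(f1,a1)\<in>M"
      and g: "g = (\<lambda>x. g1 x + s * x0 x)" "b = b1 + s*c" "(g1,b1)\<in>M"
      unfolding M'_def by blast
    define u where "u = \<alpha>*t+\<beta>* s"
    have "((\<lambda>y. (\<alpha>*f1 y + \<beta>*g1 y) + u * x0 y), (\<alpha>*a1+\<beta>*b1) + u*c) \<in> M'"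
      using inM'[OF lg_lin[OF M f(3) g(3), of \<alpha> \<beta>], of u] by simp
    moreover have "(\<lambda>y. (\<alpha>*f1 y + \<beta>*g1 y) + u * x0 y) = (\<lambda>x. \<alpha>*f x + \<beta>*g x)"
      unfolding f g u_def by (auto simp: algebra_simps)
    moreover have "(\<alpha>*a1+\<beta>*b1) + u*c = \<alpha>*a+\<beta>*b"
      unfolding f g u_def by (simp add: algebra_simps)
    ultimately show "((\<lambda>x. \<alpha>*f x + \<beta>*g x), \<alpha>*a+\<beta>*b) \<in> M'" by simp
  next
    fix f a b assume "(f,a)\<in>M'" "(f,b)\<in>M'"
    then obtain f1 a1 t f2 a2 s where f: "f = (\<lambda>x. f1 x + t * x0 x)" "a = a1 + t*c" "(f1,a1)\<in>M"
      and g: "f = (\<lambda>x. f2 x + s * x0 x)" "b = a2 + s*c" "(f2,a2)\<in>M"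
      unfolding M'_def by blast
    have eq: "f1 x + t * x0 x = f2 x + s * x0 x" for x using f(1) g(1) by metis
    show "a = b"
    proof (cases "t = s")
      case True
      then have "f1 = f2" using eq by (auto intro!: ext)
      then show ?thesis using lg_fun[OF M f(3)] g(3) f g True by simp
    next
      case False
      have "((\<lambda>x. (1/(t-s))*f2 x + (-(1/(t-s)))*f1 x), (1/(t-s))*a2 + (-(1/(t-s)))*a1) \<in> M"
        by (rule lg_lin[OF M g(3) f(3)])
      moreover have "(\<lambda>x. (1/(t-s))*f2 x + (-(1/(t-s)))*f1 x) = x0"
      proof
        fix x have "(t - s) * x0 x = f2 x - f1 x" using eq[of x] by (simp add: algebra_simps)
        then have "x0 x = (f2 x - f1 x)/(t-s)" using False by (simp add: field_simps)
        moreover have "(1/(t-s))*f2 x + (-(1/(t-s)))*f1 x = (f2 x - f1 x)/(t-s)"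
          by (simp add: diff_divide_distrib)
        ultimately show "(1/(t-s))*f2 x + (-(1/(t-s)))*f1 x = x0 x" by simp
      qed
      ultimately have "x0 \<in> fst ` M" by force
      with x0(2) show ?thesis by simp
    qed
  next
    fix f a assume "(f,a)\<in>M'"
    then obtain f1 a1 t where f: "f = (\<lambda>x. f1 x + t * x0 x)" "a = a1 + t*c" "(f1,a1)\<in>M"
      unfolding M'_def by blast
    have f1V: "f1 \<in> V" using lg_V[OF M f(3)] .
    show "a \<le> p f"
    proof (cases "t > 0")
      case True
      have "((\<lambda>x. (1/t)*f1 x), (1/t)*a1) \<in> M" using lg_scale[OF M f(3)] .
      from c_low[OF this] have 1: "c \<le> p (\<lambda>x. (1/t)*f1 x + x0 x) - (1/t)*a1" .
      have "(\<lambda>x. (1/t)*f1 x + x0 x) \<in> V" using Vp[OF V[OF f1V f1V, of "1/t" 0], of 1] by simp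
      from hom[OF this, of t] True
      have "p (\<lambda>x. t * ((1/t)*f1 x + x0 x)) = t * p (\<lambda>x. (1/t)*f1 x + x0 x)" by simp
      moreover have "(\<lambda>x. t * ((1/t)*f1 x + x0 x)) = f" using True unfolding f by (auto simp: field_simps)
      ultimately have "p f = t * p (\<lambda>x. (1/t)*f1 x + x0 x)" by simp
      moreover have "t * c \<le> t * (p (\<lambda>x. (1/t)*f1 x + x0 x) - (1/t)*a1)"
        using 1 True by (intro mult_left_mono) auto
      ultimately show ?thesis using True unfolding f by (simp add: algebra_simps)
    next
      case False
      show ?thesis
      proof (cases "t = 0")
        case True
        then have "f = f1" "a = a1" using f by auto
        then show ?thesis using lg_dom[OF M f(3)] by simp
      next
        case False2: False
        define s where "s = -t"
        have s: "s > 0" using False False2 s_def by simp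
        have "((\<lambda>x. (1/s)*f1 x), (1/s)*a1) \<in> M" using lg_scale[OF M f(3)] .
        from c_up[OF this] have 1: "(1/s)*a1 - p (\<lambda>x. (1/s)*f1 x - x0 x) \<le> c" .
        have "(\<lambda>x. (1/s)*f1 x - x0 x) \<in> V" using Vm[OF V[OF f1V f1V, of "1/s" 0]] by simp
        from hom[OF this, of s] s
        have "p (\<lambda>x. s * ((1/s)*f1 x - x0 x)) = s * p (\<lambda>x. (1/s)*f1 x - x0 x)" by simp
        moreover have "(\<lambda>x. s * ((1/s)*f1 x - x0 x)) = f" using s unfolding f s_def by (auto simp: field_simps)
        ultimately have "p f = s * p (\<lambda>x. (1/s)*f1 x - x0 x)" by simp
        moreover have "s * ((1/s)*a1 - p (\<lambda>x. (1/s)*f1 x - x0 x)) \<le> s * c"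
          using 1 s by (intro mult_left_mono) auto
        ultimately show ?thesis using s unfolding f s_def by (simp add: algebra_simps)
      qed
    qed
  qed
  show ?thesis using lg sub1 neq by blast
qed

lemma hahn_banach:
  fixes V :: "('b \<Rightarrow> real) set"
  assumes V: "\<And>f g a b. f\<in>V \<Longrightarrow> g\<in>V \<Longrightarrow> (\<lambda>x. a*f x + b*g x) \<in> V"
    and sub: "\<And>f g. f\<in>V \<Longrightarrow> g\<in>V \<Longrightarrow> p (\<lambda>x. f x + g x) \<le> p f + p g"
    and hom: "\<And>f c. f\<in>V \<Longrightarrow> c \<ge> 0 \<Longrightarrow> p (\<lambda>x. c * f x) = c * p f"
    and G0: "lingraph V p G0"
  shows "\<exists>\<xi>. (\<forall>f\<in>V. \<forall>g\<in>V. \<forall>a b. \<xi> (\<lambda>x. a*f x + b*g x) = a*\<xi> f + b*\<xi> g)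
           \<and> (\<forall>f\<in>V. \<xi> f \<le> p f) \<and> (\<forall>f a. (f,a)\<in>G0 \<longrightarrow> \<xi> f = a)"
proof -
  define A where "A = {G. lingraph V p G \<and> G0 \<subseteq> G}"
  have "\<exists>M\<in>A. \<forall>X\<in>A. M \<subseteq> X \<longrightarrow> X = M"
  proof (rule Zorn_Lemma2, intro ballI)
    fix C assume C: "C \<in> chains A"
    show "\<exists>U\<in>A. \<forall>X\<in>C. X \<subseteq> U"
    proof (cases "C = {}")
      case True then show ?thesis using G0 A_def by auto
    next
      case False
      have CA: "C \<subseteq> A" and ch: "\<And>X Y. X\<in>C \<Longrightarrow> Y\<in>C \<Longrightarrow> X \<subseteq> Y \<or> Y \<subseteq> X"
        using C unfolding chains_def chain_subset_def by auto
      have lgC: "\<And>X. X \<in> C \<Longrightarrow> lingraph V p X" using CA A_def by auto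
      obtain X0 where X0: "X0 \<in> C" using False by blast
      have "lingraph V p (\<Union>C)"
        unfolding lingraph_def
      proof (intro conjI allI impI)
        show "\<Union>C \<subseteq> V \<times> UNIV" using lgC unfolding lingraph_def by blast
        show "((\<lambda>_. 0), 0) \<in> \<Union>C" using lg_zero[OF lgC[OF X0]] X0 by blast
      next
        fix f a g b \<alpha> \<beta> assume "(f,a)\<in>\<Union>C" "(g,b)\<in>\<Union>C"
        then obtain X Y where "X\<in>C" "Y\<in>C" "(f,a)\<in>X" "(g,b)\<in>Y" by blast
        then show "((\<lambda>x. \<alpha>*f x + \<beta>*g x), \<alpha>*a+\<beta>*b) \<in> \<Union>C"
          using ch[of X Y] lg_lin[OF lgC] by blast
      next
        fix f a b assume "(f,a)\<in>\<Union>C" "(f,b)\<in>\<Union>C"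
        then obtain X Y where "X\<in>C" "Y\<in>C" "(f,a)\<in>X" "(f,b)\<in>Y" by blast
        then show "a = b" using ch[of X Y] lg_fun[OF lgC] by blast
      next
        fix f a assume "(f,a)\<in>\<Union>C"
        then show "a \<le> p f" using lg_dom[OF lgC] by blast
      qed
      moreover have "G0 \<subseteq> \<Union>C" using X0 CA A_def by blast
      ultimately show ?thesis unfolding A_def by blast
    qed
  qed
  then obtain M where MA: "M \<in> A" and Mmax: "\<And>X. X\<in>A \<Longrightarrow> M \<subseteq> X \<Longrightarrow> X = M" by blast
  have M: "lingraph V p M" "G0 \<subseteq> M" using MA A_def by auto
  have full: "f \<in> fst ` M" if "f \<in> V" for f
  proof (rule ccontr)
    assume "f \<notin> fst ` M"
    from hb_ext[OF V sub hom M(1) that this] obtain M' where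
      "lingraph V p M'" "M \<subseteq> M'" "M' \<noteq> M" by blast
    moreover have "M' \<in> A" using calculation M(2) A_def by blast
    ultimately show False using Mmax by blast
  qed
  define \<xi> where "\<xi> f = (THE a. (f,a)\<in>M)" for f
  have xiM: "(f, \<xi> f) \<in> M" if fV: "f \<in> V" for f
  proof -
    obtain a where a: "(f,a)\<in>M" using full[OF fV] by force
    have "\<xi> f = a" unfolding \<xi>_def using a lg_fun[OF M(1) a] by blast
    then show ?thesis using a by simp
  qed
  have xi_eq: "\<xi> f = a" if "(f,a)\<in>M" for f a
    using xiM[OF lg_V[OF M(1) that]] lg_fun[OF M(1) that] by blast
  show ?thesis
  proof (intro exI conjI ballI allI impI)
    fix f g a b assume "f\<in>V" "g\<in>V"
    show "\<xi> (\<lambda>x. a*f x + b*g x) = a*\<xi> f + b*\<xi> g"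
      using xi_eq[OF lg_lin[OF M(1) xiM xiM]] \<open>f\<in>V\<close> \<open>g\<in>V\<close> by blast
  next
    fix f assume "f \<in> V" then show "\<xi> f \<le> p f" using lg_dom[OF M(1) xiM] by blast
  next
    fix f a assume "(f,a)\<in>G0" then show "\<xi> f = a" using xi_eq M(2) by blast
  qed
qed



lemma bfs_meas: "bfs M X n \<Longrightarrow> f \<in> X \<Longrightarrow> f \<in> borel_measurable M"
  unfolding bfs_def by blast
lemma bfs_zero: "bfs M X n \<Longrightarrow> (\<lambda>_. 0) \<in> X"
  unfolding bfs_def by blast
lemma bfs_add: "bfs M X n \<Longrightarrow> f \<in> X \<Longrightarrow> g \<in> X \<Longrightarrow> (\<lambda>x. f x + g x) \<in> X \<and> n (\<lambda>x. f x + g x) \<le> n f + n g"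
  unfolding bfs_def by blast
lemma bfs_scale: "bfs M X n \<Longrightarrow> f \<in> X \<Longrightarrow> (\<lambda>x. c * f x) \<in> X \<and> n (\<lambda>x. c * f x) = \<bar>c\<bar> * n f"
  unfolding bfs_def by blast
lemma bfs_norm_zero: "bfs M X n \<Longrightarrow> n (\<lambda>_. 0) = 0"
  unfolding bfs_def by auto
lemma bfs_lattice: "bfs M X n \<Longrightarrow> f \<in> borel_measurable M \<Longrightarrow> g \<in> X \<Longrightarrow> (AE x in M. \<bar>f x\<bar> \<le> \<bar>g x\<bar>) \<Longrightarrow> f \<in> X \<and> n f \<le> n g"
  unfolding bfs_def by blast
lemma bfs_norm0: "bfs M X n \<Longrightarrow> f \<in> X \<Longrightarrow> n f = 0 \<longleftrightarrow> (AE x in M. f x = 0)"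
  unfolding bfs_def by blast
lemma bfs_lin: assumes "bfs M X n" "f \<in> X" "g \<in> X" shows "(\<lambda>x. a * f x + b * g x) \<in> X"
  using bfs_add[OF assms(1) bfs_scale[OF assms(1,2), THEN conjunct1] bfs_scale[OF assms(1,3), THEN conjunct1]]
  by blast
lemma bfs_nonneg: assumes B: "bfs M X n" and f: "f \<in> X" shows "0 \<le> n f"
proof -
  have "n (\<lambda>x. f x + (-1) * f x) \<le> n f + n (\<lambda>x. (-1) * f x)"
    using bfs_add[OF B f bfs_scale[OF B f, THEN conjunct1]] by blast
  moreover have "n (\<lambda>x. (-1) * f x) = n f" using bfs_scale[OF B f, of "-1"] by simp
  moreover have "(\<lambda>x. f x + (-1) * f x) = (\<lambda>_. 0)" by auto
  ultimately show ?thesis using bfs_norm_zero[OF B] by simp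
qed

lemma sum_interleave: "(\<Sum>k<2*n. a k) = (\<Sum>k<n. a (2*k) + a (2*k+1))" for a :: "nat \<Rightarrow> 'a::comm_monoid_add"
  by (induction n) (simp_all add: add.assoc)

lemma sum_grp2: "sum a {n*2..<n*2+2} = a (2*n) + a (2*n+1)" for a :: "nat \<Rightarrow> 'a::comm_monoid_add"
proof -
  have "{n*2..<n*2+2} = {2*n, 2*n+1}" by auto
  then show ?thesis by simp
qed

lemma suminf_interleave_ennreal: "(\<Sum>k. a k) = (\<Sum>k. a (2*k) + a (2*k+1))" for a :: "nat \<Rightarrow> ennreal"
proof -
  have "(\<lambda>n. sum a {n*2..<n*2+2}) sums (\<Sum>k. a k)"
    by (rule sums_group) (auto intro: summable_sums)
  then show ?thesis unfolding sum_grp2 by (simp add: sums_iff)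
qed

lemma suminf_interleave_real:
  fixes a :: "nat \<Rightarrow> real"
  assumes nn: "\<And>k. 0 \<le> a k" and s1: "summable (\<lambda>k. a (2*k))" and s2: "summable (\<lambda>k. a (2*k+1))"
  shows "summable a \<and> (\<Sum>k. a k) = (\<Sum>k. a (2*k)) + (\<Sum>k. a (2*k+1))"
proof -
  have sA: "summable (\<lambda>k. a (2*k) + a (2*k+1))" using summable_add[OF s1 s2] .
  have sa: "summable a"
  proof (rule summableI_nonneg_bounded[OF nn])
    fix m
    have "(\<Sum>k<m. a k) \<le> (\<Sum>k<2*m. a k)" by (rule sum_mono2) (auto simp: nn)
    also have "\<dots> = (\<Sum>k<m. a (2*k) + a (2*k+1))" by (rule sum_interleave)
    also have "\<dots> \<le> (\<Sum>k. a (2*k) + a (2*k+1))" by (rule sum_le_suminf[OF sA]) (auto simp: nn)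
    finally show "(\<Sum>k<m. a k) \<le> (\<Sum>k. a (2*k) + a (2*k+1))" .
  qed
  have "(\<lambda>n. sum a {n*2..<n*2+2}) sums (\<Sum>k. a k)"
    by (rule sums_group) (auto intro: summable_sums sa)
  then have "(\<Sum>k. a k) = (\<Sum>k. a (2*k) + a (2*k+1))" unfolding sum_grp2 by (simp add: sums_iff)
  also have "\<dots> = (\<Sum>k. a (2*k)) + (\<Sum>k. a (2*k+1))" using suminf_add[OF s1 s2] by simp
  finally show ?thesis using sa by simp
qed

locale piS =
  fixes N :: "'b measure" and Y :: "('b \<Rightarrow> real) set" and nY :: "('b \<Rightarrow> real) \<Rightarrow> real" and Z :: "('b \<Rightarrow> real) set" and nZ :: "('b \<Rightarrow> real) \<Rightarrow> real"
  assumes bY: "bfs N Y nY" and Zm: "Z \<subseteq> borel_measurable N" and Z0: "(\<lambda>_. 0) \<in> Z"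
    and Znn: "\<And>g. g \<in> Z \<Longrightarrow> 0 \<le> nZ g"
begin

abbreviation "rep \<equiv> pi_rep N Y nY Z nZ"
abbreviation "PS \<equiv> pi_set N Y nY Z nZ"
abbreviation "pn \<equiv> pi_norm N Y nY Z nZ"

lemma rep_nn: "rep u f g \<Longrightarrow> 0 \<le> nY (f k) * nZ (g k)"
  unfolding pi_rep_def using bfs_nonneg[OF bY] Znn by (auto intro!: mult_nonneg_nonneg)

lemma rep_sum_nn: "rep u f g \<Longrightarrow> 0 \<le> (\<Sum>k. nY (f k) * nZ (g k))"
  using rep_nn by (intro suminf_nonneg) (auto simp: pi_rep_def)

lemma rep_finite:
  fixes n :: nat
  assumes f: "\<And>i. i < n \<Longrightarrow> f i \<in> Y" and g: "\<And>i. i < n \<Longrightarrow> g i \<in> Z"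
  shows "rep (\<lambda>\<omega>. \<Sum>i<n. f i \<omega> * g i \<omega>) (\<lambda>k. if k < n then f k else (\<lambda>_. 0)) (\<lambda>k. if k < n then g k else (\<lambda>_. 0))"
  unfolding pi_rep_def
proof (intro conjI allI)
  fix k show "(if k < n then f k else (\<lambda>_. 0)) \<in> Y" using f bfs_zero[OF bY] by auto
  show "(if k < n then g k else (\<lambda>_. 0)) \<in> Z" using g Z0 by auto
next
  show "summable (\<lambda>k. nY (if k < n then f k else (\<lambda>_. 0)) * nZ (if k < n then g k else (\<lambda>_. 0)))"
    by (rule summable_finite[of "{..<n}"]) (auto simp: bfs_norm_zero[OF bY])
next
  show "AE x in N. ennreal \<bar>\<Sum>i<n. f i x * g i x\<bar> \<le> (\<Sum>k. ennreal \<bar>(if k < n then f k else (\<lambda>_. 0)) x * (if k < n then g k else (\<lambda>_. 0)) x\<bar>)"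
  proof (rule AE_I2)
    fix x
    have "(\<Sum>k. ennreal \<bar>(if k < n then f k else (\<lambda>_. 0)) x * (if k < n then g k else (\<lambda>_. 0)) x\<bar>)
        = (\<Sum>k\<in>{..<n}. ennreal \<bar>(if k < n then f k else (\<lambda>_. 0)) x * (if k < n then g k else (\<lambda>_. 0)) x\<bar>)"
      by (rule suminf_finite) auto
    also have "\<dots> = (\<Sum>k<n. ennreal \<bar>f k x * g k x\<bar>)" by simp
    also have "\<dots> = ennreal (\<Sum>k<n. \<bar>f k x * g k x\<bar>)" by (rule sum_ennreal) simp
    finally show "ennreal \<bar>\<Sum>i<n. f i x * g i x\<bar> \<le> (\<Sum>k. ennreal \<bar>(if k < n then f k else (\<lambda>_. 0)) x * (if k < n then g k else (\<lambda>_. 0)) x\<bar>)"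
      by (simp add: ennreal_leI sum_abs)
  qed
qed

lemma PS_finite:
  fixes n :: nat
  assumes f: "\<And>i. i < n \<Longrightarrow> f i \<in> Y" and g: "\<And>i. i < n \<Longrightarrow> g i \<in> Z"
  shows "(\<lambda>\<omega>. \<Sum>i<n. f i \<omega> * g i \<omega>) \<in> PS"
proof -
  have m: "(\<lambda>\<omega>. \<Sum>i<n. f i \<omega> * g i \<omega>) \<in> borel_measurable N"
  proof (rule borel_measurable_sum)
    fix i assume "i \<in> {..<n}"
    then have "f i \<in> borel_measurable N" "g i \<in> borel_measurable N" using bfs_meas[OF bY] f g Zm by auto
    then show "(\<lambda>\<omega>. f i \<omega> * g i \<omega>) \<in> borel_measurable N" by measurable
  qed
  show ?thesis unfolding pi_set_def using rep_finite[where n=n and f=f and g=g, OF f g] m by blast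
qed

lemma rep_scale:
  assumes r: "rep u f g"
  shows "rep (\<lambda>x. c * u x) (\<lambda>k x. c * f k x) g \<and> (\<Sum>k. nY (\<lambda>x. c * f k x) * nZ (g k)) = \<bar>c\<bar> * (\<Sum>k. nY (f k) * nZ (g k))"
proof -
  have fY: "f k \<in> Y" and gZ: "g k \<in> Z" for k using r unfolding pi_rep_def by auto
  have sm: "summable (\<lambda>k. nY (f k) * nZ (g k))" using r unfolding pi_rep_def by auto
  have eq: "nY (\<lambda>x. c * f k x) * nZ (g k) = \<bar>c\<bar> * (nY (f k) * nZ (g k))" for k
    using bfs_scale[OF bY fY] by simp
  have ae: "AE x in N. ennreal \<bar>u x\<bar> \<le> (\<Sum>k. ennreal \<bar>f k x * g k x\<bar>)" using r unfolding pi_rep_def by auto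
  have "AE x in N. ennreal \<bar>c * u x\<bar> \<le> (\<Sum>k. ennreal \<bar>c * f k x * g k x\<bar>)"
    using ae
  proof eventually_elim
    case (elim x)
    have "ennreal \<bar>c * u x\<bar> = ennreal \<bar>c\<bar> * ennreal \<bar>u x\<bar>"
      unfolding abs_mult by (rule ennreal_mult) auto
    also have "\<dots> \<le> ennreal \<bar>c\<bar> * (\<Sum>k. ennreal \<bar>f k x * g k x\<bar>)" using elim by (rule mult_left_mono) simp
    also have "\<dots> = (\<Sum>k. ennreal \<bar>c\<bar> * ennreal \<bar>f k x * g k x\<bar>)" by (rule ennreal_suminf_cmult[symmetric])
    also have "\<dots> = (\<Sum>k. ennreal \<bar>c * f k x * g k x\<bar>)"
    proof (rule suminf_cong)
      fix k
      show "ennreal \<bar>c\<bar> * ennreal \<bar>f k x * g k x\<bar> = ennreal \<bar>c * f k x * g k x\<bar>"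
        unfolding mult.assoc[of c] abs_mult[of c] by (rule ennreal_mult[symmetric]) auto
    qed
    finally show ?case .
  qed
  moreover have "summable (\<lambda>k. nY (\<lambda>x. c * f k x) * nZ (g k))"
    unfolding eq by (rule summable_mult[OF sm])
  moreover have "(\<lambda>x. c * f k x) \<in> Y" for k using bfs_scale[OF bY fY] by blast
  ultimately have "rep (\<lambda>x. c * u x) (\<lambda>k x. c * f k x) g"
    unfolding pi_rep_def using gZ by (simp add: mult.assoc)
  moreover have "(\<Sum>k. nY (\<lambda>x. c * f k x) * nZ (g k)) = \<bar>c\<bar> * (\<Sum>k. nY (f k) * nZ (g k))"
    unfolding eq by (rule suminf_mult[OF sm])
  ultimately show ?thesis by blast
qed

lemma rep_add:
  assumes r1: "rep u f g" and r2: "rep v f' g'"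
  shows "\<exists>F G. rep (\<lambda>x. u x + v x) F G \<and> (\<Sum>k. nY (F k) * nZ (G k)) = (\<Sum>k. nY (f k) * nZ (g k)) + (\<Sum>k. nY (f' k) * nZ (g' k))"
proof -
  define F where "F k = (if even k then f (k div 2) else f' (k div 2))" for k
  define G where "G k = (if even k then g (k div 2) else g' (k div 2))" for k
  have FY: "F k \<in> Y" and GZ: "G k \<in> Z" for k using r1 r2 unfolding pi_rep_def F_def G_def by auto
  have e1: "F (2*k) = f k" "G (2*k) = g k" "F (Suc (2*k)) = f' k" "G (Suc (2*k)) = g' k" for k
    unfolding F_def G_def by auto
  have s1: "summable (\<lambda>k. nY (f k) * nZ (g k))" and s2: "summable (\<lambda>k. nY (f' k) * nZ (g' k))"
    using r1 r2 unfolding pi_rep_def by auto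
  have nn: "0 \<le> nY (F k) * nZ (G k)" for k using bfs_nonneg[OF bY FY] Znn[OF GZ] by simp
  have I: "summable (\<lambda>k. nY (F k) * nZ (G k)) \<and> (\<Sum>k. nY (F k) * nZ (G k)) = (\<Sum>k. nY (f k) * nZ (g k)) + (\<Sum>k. nY (f' k) * nZ (g' k))"
    using suminf_interleave_real[of "\<lambda>k. nY (F k) * nZ (G k)", OF nn] s1 s2 by (simp add: e1)
  have ae1: "AE x in N. ennreal \<bar>u x\<bar> \<le> (\<Sum>k. ennreal \<bar>f k x * g k x\<bar>)" using r1 unfolding pi_rep_def by auto
  have ae2: "AE x in N. ennreal \<bar>v x\<bar> \<le> (\<Sum>k. ennreal \<bar>f' k x * g' k x\<bar>)" using r2 unfolding pi_rep_def by auto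
  have "AE x in N. ennreal \<bar>u x + v x\<bar> \<le> (\<Sum>k. ennreal \<bar>F k x * G k x\<bar>)"
    using ae1 ae2
  proof eventually_elim
    case (elim x)
    have "ennreal \<bar>u x + v x\<bar> \<le> ennreal (\<bar>u x\<bar> + \<bar>v x\<bar>)" by (rule ennreal_leI) simp
    also have "\<dots> = ennreal \<bar>u x\<bar> + ennreal \<bar>v x\<bar>" by (simp add: ennreal_plus)
    also have "\<dots> \<le> (\<Sum>k. ennreal \<bar>f k x * g k x\<bar>) + (\<Sum>k. ennreal \<bar>f' k x * g' k x\<bar>)"
      using elim by (rule add_mono)
    also have "\<dots> = (\<Sum>k. ennreal \<bar>f k x * g k x\<bar> + ennreal \<bar>f' k x * g' k x\<bar>)"
      by (rule suminf_add) auto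
    also have "\<dots> = (\<Sum>k. ennreal \<bar>F k x * G k x\<bar>)"
      using suminf_interleave_ennreal[of "\<lambda>k. ennreal \<bar>F k x * G k x\<bar>"] by (simp add: e1)
    finally show ?case .
  qed
  then have "rep (\<lambda>x. u x + v x) F G" unfolding pi_rep_def using FY GZ I by auto
  then show ?thesis using I by blast
qed

lemma PS_rep: "u \<in> PS \<Longrightarrow> \<exists>f g. rep u f g"
  unfolding pi_set_def by auto
lemma PS_meas: "u \<in> PS \<Longrightarrow> u \<in> borel_measurable N"
  unfolding pi_set_def by auto

lemma PS_lin: assumes "u \<in> PS" "v \<in> PS" shows "(\<lambda>x. a * u x + b * v x) \<in> PS"
proof -
  obtain f g f' g' where r: "rep u f g" "rep v f' g'" using assms PS_rep by blast
  obtain F G where "rep (\<lambda>x. (\<lambda>x. a * u x) x + (\<lambda>x. b * v x) x) F G"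
    using rep_add[OF rep_scale[OF r(1), of a, THEN conjunct1] rep_scale[OF r(2), of b, THEN conjunct1]] by blast
  moreover have "(\<lambda>x. a * u x + b * v x) \<in> borel_measurable N" using PS_meas assms by measurable
  ultimately show ?thesis unfolding pi_set_def by auto
qed

lemma pn_lower: "rep u f g \<Longrightarrow> pn u \<le> (\<Sum>k. nY (f k) * nZ (g k))"
  unfolding pi_norm_def
  by (rule cInf_lower) (auto intro!: bdd_belowI[of _ 0] dest: rep_sum_nn)

lemma pn_greatest: "u \<in> PS \<Longrightarrow> (\<And>f g. rep u f g \<Longrightarrow> z \<le> (\<Sum>k. nY (f k) * nZ (g k))) \<Longrightarrow> z \<le> pn u"
  unfolding pi_norm_def
  by (rule cInf_greatest) (auto dest: PS_rep)

lemma pn_nonneg: "u \<in> PS \<Longrightarrow> 0 \<le> pn u"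
  using pn_greatest rep_sum_nn by blast

lemma pn_add: assumes u: "u \<in> PS" and v: "v \<in> PS" shows "pn (\<lambda>x. u x + v x) \<le> pn u + pn v"
proof -
  have "pn (\<lambda>x. u x + v x) - (\<Sum>k. nY (f' k) * nZ (g' k)) \<le> pn u" if r2: "rep v f' g'" for f' g'
  proof (rule pn_greatest[OF u])
    fix f g assume r1: "rep u f g"
    obtain F G where "rep (\<lambda>x. u x + v x) F G" "(\<Sum>k. nY (F k) * nZ (G k)) = (\<Sum>k. nY (f k) * nZ (g k)) + (\<Sum>k. nY (f' k) * nZ (g' k))"
      using rep_add[OF r1 r2] by blast
    with pn_lower[OF this(1)] show "pn (\<lambda>x. u x + v x) - (\<Sum>k. nY (f' k) * nZ (g' k)) \<le> (\<Sum>k. nY (f k) * nZ (g k))" by simp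
  qed
  then have "pn (\<lambda>x. u x + v x) - pn u \<le> pn v"
    by (intro pn_greatest[OF v]) (auto simp: algebra_simps)
  then show ?thesis by simp
qed

lemma pn_scale_le: assumes u: "u \<in> PS" shows "pn (\<lambda>x. c * u x) \<le> \<bar>c\<bar> * pn u"
proof (cases "c = 0")
  case True
  obtain f g where r: "rep u f g" using PS_rep[OF u] by blast
  from pn_lower[OF rep_scale[OF r, of c, THEN conjunct1]] rep_scale[OF r, of c] True
  show ?thesis by simp
next
  case False
  have "pn (\<lambda>x. c * u x) / \<bar>c\<bar> \<le> pn u"
  proof (rule pn_greatest[OF u])
    fix f g assume r: "rep u f g"
    from pn_lower[OF rep_scale[OF r, of c, THEN conjunct1]] rep_scale[OF r, of c] False
    show "pn (\<lambda>x. c * u x) / \<bar>c\<bar> \<le> (\<Sum>k. nY (f k) * nZ (g k))" by (simp add: divide_le_eq mult.commute)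
  qed
  then show ?thesis using False by (simp add: divide_le_eq mult.commute)
qed

lemma pn_hom: assumes u: "u \<in> PS" and c: "c \<ge> 0" shows "pn (\<lambda>x. c * u x) = c * pn u"
proof (cases "c = 0")
  case True
  have "(\<lambda>x. c * u x) \<in> PS" using PS_lin[OF u u, of c 0] by simp
  then show ?thesis using pn_scale_le[OF u, of c] pn_nonneg True by force
next
  case False
  have cu: "(\<lambda>x. c * u x) \<in> PS" using PS_lin[OF u u, of c 0] by simp
  have "pn (\<lambda>x. (1/c) * (c * u x)) \<le> \<bar>1/c\<bar> * pn (\<lambda>x. c * u x)" using pn_scale_le[OF cu] .
  then have "pn u \<le> (1/c) * pn (\<lambda>x. c * u x)" using False c by simp
  then have "c * pn u \<le> pn (\<lambda>x. c * u x)" using False c by (simp add: field_simps)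
  then show ?thesis using pn_scale_le[OF u, of c] c by simp
qed

lemma pn_zero: "pn (\<lambda>_. 0) = 0"
proof -
  have z: "(\<lambda>_. 0) \<in> PS" using PS_finite[of 0] by simp
  show ?thesis using pn_hom[OF z, of 0] by simp
qed

end



lemma bfs_complete: "bfs M X n \<Longrightarrow> (\<And>k. F k \<in> X) \<Longrightarrow>
   (\<And>e. e > 0 \<Longrightarrow> \<exists>K. \<forall>i\<ge>K. \<forall>j\<ge>K. n (\<lambda>x. F i x - F j x) < e) \<Longrightarrow>
   \<exists>f\<in>X. (\<lambda>k. n (\<lambda>x. F k x - f x)) \<longlonglongrightarrow> 0"
  unfolding bfs_def by blast

lemma bfs_sum_norm:
  assumes B: "bfs M X n" and fin: "finite S" and a: "\<And>i. i \<in> S \<Longrightarrow> a i \<in> X"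
  shows "(\<lambda>x. \<Sum>i\<in>S. c i * a i x) \<in> X \<and> n (\<lambda>x. \<Sum>i\<in>S. c i * a i x) \<le> (\<Sum>i\<in>S. \<bar>c i\<bar> * n (a i))"
  using fin a
proof (induction S rule: finite_induct)
  case empty
  then show ?case using bfs_zero[OF B] bfs_norm_zero[OF B] by simp
next
  case (insert i S)
  have IH: "(\<lambda>x. \<Sum>i\<in>S. c i * a i x) \<in> X" "n (\<lambda>x. \<Sum>i\<in>S. c i * a i x) \<le> (\<Sum>i\<in>S. \<bar>c i\<bar> * n (a i))"
    using insert by auto
  have ai: "a i \<in> X" using insert by auto
  have sc: "(\<lambda>x. c i * a i x) \<in> X" "n (\<lambda>x. c i * a i x) = \<bar>c i\<bar> * n (a i)" using bfs_scale[OF B ai] by auto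
  have eq: "(\<lambda>x. \<Sum>i\<in>insert i S. c i * a i x) = (\<lambda>x. c i * a i x + (\<Sum>i\<in>S. c i * a i x))"
    using insert by auto
  show ?case unfolding eq using bfs_add[OF B sc(1) IH(1)] sc(2) IH(2) insert by auto
qed

lemma geo_half: "i \<le> j \<Longrightarrow> (\<Sum>n\<in>{i..<j}. (1/2::real)^n) = 2*(1/2)^i - 2*(1/2)^j"
proof (induction j rule: dec_induct)
  case base then show ?case by simp
next
  case (step j) then show ?case by (simp add: sum.atLeastLessThan_Suc)
qed

lemma kothe_mem: "h \<in> kothe N Y \<Longrightarrow> h \<in> borel_measurable N \<and> (\<forall>f\<in>Y. integrable N (\<lambda>x. h x * f x))"
  unfolding kothe_def ydual_def L1set_def by auto

lemma kothe_bdd: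
  assumes B: "bfs N Y nY" and h: "h \<in> kothe N Y"
  shows "bdd_above ((\<lambda>f. L1norm N (\<lambda>x. h x * f x)) ` {f\<in>Y. nY f \<le> 1})"
proof (rule ccontr)
  assume nb: "\<not> ?thesis"
  have hint: "\<And>f. f \<in> Y \<Longrightarrow> integrable N (\<lambda>x. h x * f x)" using kothe_mem[OF h] by auto
  have "\<forall>k::nat. \<exists>f. f \<in> Y \<and> nY f \<le> 1 \<and> 4^k < L1norm N (\<lambda>x. h x * f x)"
  proof
    fix k :: nat
    from nb have "\<not> (\<forall>x\<in>(\<lambda>f. L1norm N (\<lambda>x. h x * f x)) ` {f\<in>Y. nY f \<le> 1}. x \<le> 4^k)"
      unfolding bdd_above_def by blast
    then show "\<exists>f. f \<in> Y \<and> nY f \<le> 1 \<and> 4^k < L1norm N (\<lambda>x. h x * f x)" by force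
  qed
  then obtain \<phi> where \<phi>: "\<And>k. \<phi> k \<in> Y" "\<And>k. nY (\<phi> k) \<le> 1" "\<And>k. 4^k < L1norm N (\<lambda>x. h x * \<phi> k x)"
    by metis
  define a where "a k = (\<lambda>x. \<bar>\<phi> k x\<bar>)" for k
  have aY: "a k \<in> Y \<and> nY (a k) \<le> 1" for k
  proof -
    have "a k \<in> borel_measurable N" unfolding a_def using bfs_meas[OF B \<phi>(1)] by measurable
    then have "a k \<in> Y \<and> nY (a k) \<le> nY (\<phi> k)" by (rule bfs_lattice[OF B _ \<phi>(1)]) (simp add: a_def)
    then show ?thesis using \<phi>(2)[of k] by auto
  qed
  have a_nn: "0 \<le> a k x" for k x unfolding a_def by simp
  define F where "F k = (\<lambda>x. \<Sum>n\<in>{..<k}. (1/2::real)^n * a n x)" for k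
  have FY: "F k \<in> Y" for k unfolding F_def using bfs_sum_norm[OF B, of "{..<k}" a] aY by auto
  have Fdiff: "nY (\<lambda>x. F j x - F i x) \<le> 2*(1/2)^i" if ij: "i \<le> j" for i j
  proof -
    have eqF: "(\<lambda>x. F j x - F i x) = (\<lambda>x. \<Sum>n\<in>{i..<j}. (1/2::real)^n * a n x)"
    proof
      fix x
      have U: "{..<j} = {..<i} \<union> {i..<j}" using ij by auto
      have "F j x = (\<Sum>n\<in>{..<i} \<union> {i..<j}. (1/2::real)^n * a n x)"
        unfolding F_def by (subst U) (rule refl)
      also have "\<dots> = F i x + (\<Sum>n\<in>{i..<j}. (1/2::real)^n * a n x)"
        unfolding F_def by (rule sum.union_disjoint) auto
      finally have "F j x = F i x + (\<Sum>n\<in>{i..<j}. (1/2::real)^n * a n x)" .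
      then show "F j x - F i x = (\<Sum>n\<in>{i..<j}. (1/2::real)^n * a n x)" by simp
    qed
    moreover have "nY (\<lambda>x. \<Sum>n\<in>{i..<j}. (1/2::real)^n * a n x) \<le> (\<Sum>n\<in>{i..<j}. \<bar>(1/2::real)^n\<bar> * nY (a n))"
      using bfs_sum_norm[OF B, of "{i..<j}" a "\<lambda>n. (1/2::real)^n"] aY by auto
    moreover have "(\<Sum>n\<in>{i..<j}. \<bar>(1/2::real)^n\<bar> * nY (a n)) \<le> (\<Sum>n\<in>{i..<j}. (1/2::real)^n)"
      by (rule sum_mono) (use aY in \<open>auto intro: mult_left_le\<close>)
    moreover have "(0::real) \<le> 2*(1/2)^j" by simp
    moreover have "nY (\<lambda>x. F j x - F i x) = nY (\<lambda>x. \<Sum>n\<in>{i..<j}. (1/2::real)^n * a n x)"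
      unfolding eqF ..
    ultimately show ?thesis using geo_half[OF ij] by linarith
  qed
  have Fdiff2: "nY (\<lambda>x. F i x - F j x) \<le> 2*(1/2)^(min i j)" for i j
  proof (cases "i \<le> j")
    case True
    have m: "(\<lambda>x. F j x - F i x) \<in> Y" using bfs_lin[OF B FY FY, where a=1 and b="-1"] by simp
    have "nY (\<lambda>x. (-1) * (F j x - F i x)) = nY (\<lambda>x. F j x - F i x)" using bfs_scale[OF B m, of "-1"] by simp
    moreover have "(\<lambda>x. (-1) * (F j x - F i x)) = (\<lambda>x. F i x - F j x)" by auto
    ultimately show ?thesis using Fdiff[OF True] True by (simp add: min_def)
  next
    case False then show ?thesis using Fdiff[of j i] by (simp add: min_def)
  qed
  obtain f where fY: "f \<in> Y" and lim: "(\<lambda>k. nY (\<lambda>x. F k x - f x)) \<longlonglongrightarrow> 0"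
  proof -
    have "\<exists>f\<in>Y. (\<lambda>k. nY (\<lambda>x. F k x - f x)) \<longlonglongrightarrow> 0"
    proof (rule bfs_complete[OF B FY])
      fix e :: real assume e: "e > 0"
      obtain K where K: "(1/2::real)^K < e/2" using real_arch_pow_inv[of "e/2" "1/2"] e by auto
      show "\<exists>K. \<forall>i\<ge>K. \<forall>j\<ge>K. nY (\<lambda>x. F i x - F j x) < e"
      proof (intro exI allI impI)
        fix i j assume "K \<le> i" "K \<le> j"
        then have m: "(1/2::real)^(min i j) \<le> (1/2)^K" by (intro power_decreasing) auto
        show "nY (\<lambda>x. F i x - F j x) < e" using Fdiff2[of i j] K m by linarith
      qed
    qed
    then show ?thesis using that by blast
  qed
  have Fmono: "F k x \<le> F m x" if "k \<le> m" for k m x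
    unfolding F_def using that by (intro sum_mono2) (auto simp: a_nn)
  have Fle: "AE x in N. F k x \<le> f x" for k
  proof -
    define d where "d = (\<lambda>x. max (F k x - f x) 0)"
    have dm: "d \<in> borel_measurable N" unfolding d_def using bfs_meas[OF B FY] bfs_meas[OF B fY] by measurable
    have dle: "d \<in> Y \<and> nY d \<le> nY (\<lambda>x. F m x - f x)" if "k \<le> m" for m
    proof (rule bfs_lattice[OF B dm])
      show "(\<lambda>x. F m x - f x) \<in> Y" using bfs_lin[OF B FY fY, where a=1 and b="-1"] by simp
      show "AE x in N. \<bar>d x\<bar> \<le> \<bar>F m x - f x\<bar>"
      proof (rule AE_I2)
        fix x have "F k x \<le> F m x" by (rule Fmono[OF that])
        then show "\<bar>d x\<bar> \<le> \<bar>F m x - f x\<bar>" unfolding d_def by (simp add: max_def abs_if)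
      qed
    qed
    have "nY d \<le> 0"
      by (rule LIMSEQ_le_const[OF lim]) (use dle in blast)
    moreover have "0 \<le> nY d" using bfs_nonneg[OF B] dle[of k] by auto
    ultimately have "nY d = 0" by simp
    then have "AE x in N. d x = 0" using bfs_norm0[OF B] dle[of k] by blast
    then show ?thesis by eventually_elim (auto simp: d_def max_def split: if_splits)
  qed
  have Fnn: "0 \<le> F k x" for k x unfolding F_def by (intro sum_nonneg) (auto simp: a_nn)
  have ak: "AE x in N. (1/2::real)^k * a k x \<le> f x" for k
    using Fle[of "Suc k"]
  proof eventually_elim
    case (elim x)
    have "F (Suc k) x = F k x + (1/2)^k * a k x" unfolding F_def by simp
    then show ?case using elim Fnn[of k x] by simp
  qed
  define R where "R = L1norm N (\<lambda>x. h x * f x)"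
  have bound: "2^k \<le> R" for k :: nat
  proof -
    have i1: "integrable N (\<lambda>x. (1/2::real)^k * \<bar>h x * \<phi> k x\<bar>)"
      using hint[OF \<phi>(1)] by (intro integrable_mult_right integrable_abs)
    have i2: "integrable N (\<lambda>x. \<bar>h x * f x\<bar>)" using hint[OF fY] by (intro integrable_abs)
    have "AE x in N. (1/2::real)^k * \<bar>h x * \<phi> k x\<bar> \<le> \<bar>h x * f x\<bar>"
      using ak[of k]
    proof eventually_elim
      case (elim x)
      have "(1/2::real)^k * \<bar>h x * \<phi> k x\<bar> = \<bar>h x\<bar> * ((1/2)^k * a k x)" by (simp add: a_def abs_mult)
      also have "\<dots> \<le> \<bar>h x\<bar> * \<bar>f x\<bar>" using elim by (intro mult_left_mono) auto
      finally show ?case by (simp add: abs_mult)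
    qed
    from integral_mono_AE[OF i1 i2 this]
    have "(1/2::real)^k * L1norm N (\<lambda>x. h x * \<phi> k x) \<le> R" unfolding R_def L1norm_def by simp
    moreover have "(1/2::real)^k * 4^k < (1/2::real)^k * L1norm N (\<lambda>x. h x * \<phi> k x)"
      using \<phi>(3)[of k] by simp
    moreover have "(1/2::real)^k * 4^k = 2^k" by (simp add: power_mult_distrib[symmetric])
    ultimately show ?thesis by simp
  qed
  obtain k :: nat where "R < 2^k" using real_arch_pow[of 2 R] by auto
  with bound[of k] show False by simp
qed

lemma kothe_norm_nonneg:
  assumes B: "bfs N Y nY" and h: "h \<in> kothe N Y"
  shows "0 \<le> kothe_norm N Y nY h"
proof -
  have z: "(\<lambda>_. 0) \<in> {f\<in>Y. nY f \<le> 1}" using bfs_zero[OF B] bfs_norm_zero[OF B] by simp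
  have "L1norm N (\<lambda>x. h x * (\<lambda>_. 0) x) \<le> (SUP f\<in>{f\<in>Y. nY f \<le> 1}. L1norm N (\<lambda>x. h x * f x))"
    by (rule cSUP_upper[OF z kothe_bdd[OF B h]])
  then show ?thesis unfolding kothe_norm_def ydual_norm_def L1norm_def by simp
qed



lemma sum_split_nat: "(\<Sum>i<n+m. g i) = (\<Sum>i<n. g i) + (\<Sum>i<m. g (n+i))" for g :: "nat \<Rightarrow> 'a::comm_monoid_add"
  by (induction m) (simp_all add: add.assoc)

theorem theorem3p1:
  fixes M :: "'a measure" and N :: "'b measure"
    and X1 X2 :: "('a \<Rightarrow> real) set" and nX1 nX2 :: "('a \<Rightarrow> real) \<Rightarrow> real"
    and Y1 Y2 :: "('b \<Rightarrow> real) set" and nY1 nY2 :: "('b \<Rightarrow> real) \<Rightarrow> real"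
    and T S :: "('a \<Rightarrow> real) \<Rightarrow> ('b \<Rightarrow> real)" and h :: "'a \<Rightarrow> real"
  assumes "sigma_finite_measure M" and "sigma_finite_measure N"
    and "bfs M X1 nX1" and "saturated M X1"
    and "bfs M X2 nX2" and "saturated M X2"
    and "bfs N Y1 nY1" and "saturated N Y1"
    and "bfs N Y2 nY2" and "saturated N Y2"
    and "bfs_op M X1 nX1 N Y1 nY1 T" and "nontrivial_op N X1 T"
    and "bfs_op M X2 nX2 N Y2 nY2 S" and "nontrivial_op N X2 S"
    and "saturated N (ydual N Y2 (kothe N (kothe N Y1)))"
    and "h \<in> ydual M X1 X2"
  shows "(\<exists>C>0. \<forall>(n::nat) (x::nat \<Rightarrow> 'a \<Rightarrow> real) (y::nat \<Rightarrow> 'b \<Rightarrow> real).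
            (\<forall>i<n. x i \<in> X1) \<longrightarrow> (\<forall>i<n. y i \<in> kothe N Y1) \<longrightarrow>
            (\<Sum>i<n. \<integral>\<omega>. T (x i) \<omega> * y i \<omega> \<partial>N)
              \<le> C * pi_norm N Y2 nY2 (kothe N Y1) (kothe_norm N Y1 nY1)
                     (\<lambda>\<omega>. \<Sum>i<n. S (\<lambda>t. h t * x i t) \<omega> * y i \<omega>))
     \<longleftrightarrow>
     (\<exists>\<xi>. pi_dual N Y2 nY2 (kothe N Y1) (kothe_norm N Y1 nY1) \<xi> \<and>
        (\<forall>x\<in>X1. \<forall>y\<in>kothe N Y1.
           (\<integral>\<omega>. T x \<omega> * y \<omega> \<partial>N) = \<xi> (\<lambda>\<omega>. S (\<lambda>t. h t * x t) \<omega> * y \<omega>)))"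
    (is "?A \<longleftrightarrow> ?B")
proof -
  note BY1 = assms(7) and BY2 = assms(9) and ST = assms(13) and hd = assms(16)
  define K1 where "K1 = kothe N Y1"
  define nK where "nK = kothe_norm N Y1 nY1"
  interpret piS N Y2 nY2 K1 nK
  proof
    show "bfs N Y2 nY2" by (rule BY2)
    show "K1 \<subseteq> borel_measurable N" unfolding K1_def using kothe_mem by blast
    show "(\<lambda>_. 0) \<in> K1" unfolding K1_def kothe_def ydual_def L1set_def by simp
    show "0 \<le> nK g" if "g \<in> K1" for g using kothe_norm_nonneg[OF BY1] that unfolding K1_def nK_def by blast
  qed
  have SY: "S (\<lambda>t. h t * x t) \<in> Y2" if "x \<in> X1" for x
    using hd ST that unfolding ydual_def bfs_op_def by blast
  have PS1: "(\<lambda>\<omega>. f \<omega> * g \<omega>) \<in> PS" if "f \<in> Y2" "g \<in> K1" for f g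
    using PS_finite[of 1 "\<lambda>_. f" "\<lambda>_. g"] that by simp
  have PSn: "(\<lambda>\<omega>. \<Sum>i<n. S (\<lambda>t. h t * x i t) \<omega> * y i \<omega>) \<in> PS"
    if "\<forall>i<n. x i \<in> X1" "\<forall>i<n. y i \<in> K1" for n :: nat and x y
    using PS_finite[of n "\<lambda>i. S (\<lambda>t. h t * x i t)" y] that SY by auto
  have zPS: "(\<lambda>_. 0) \<in> PS" using PS_finite[of 0] by simp
  show ?thesis
  proof
    assume ?B
    then obtain \<xi> where pd: "pi_dual N Y2 nY2 K1 nK \<xi>"
      and eq: "\<And>x y. x\<in>X1 \<Longrightarrow> y\<in>K1 \<Longrightarrow> (\<integral>\<omega>. T x \<omega> * y \<omega> \<partial>N) = \<xi> (\<lambda>\<omega>. S (\<lambda>t. h t * x t) \<omega> * y \<omega>)"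
      unfolding K1_def nK_def by blast
    have lin: "\<And>f g a b. f\<in>PS \<Longrightarrow> g\<in>PS \<Longrightarrow> \<xi> (\<lambda>x. a * f x + b * g x) = a * \<xi> f + b * \<xi> g"
      using pd unfolding pi_dual_def by blast
    obtain K where K: "\<And>f. f\<in>PS \<Longrightarrow> \<bar>\<xi> f\<bar> \<le> K * pn f" using pd unfolding pi_dual_def by blast
    have xisum: "\<xi> (\<lambda>\<omega>. \<Sum>i<n. S (\<lambda>t. h t * x i t) \<omega> * y i \<omega>) = (\<Sum>i<n. \<integral>\<omega>. T (x i) \<omega> * y i \<omega> \<partial>N)"
      if "\<forall>i<n. x i \<in> X1" "\<forall>i<n. y i \<in> K1" for n :: nat and x y
      using that
    proof (induction n)
      case 0
      have "\<xi> (\<lambda>x. 0 * (\<lambda>_. 0) x + 0 * (\<lambda>_. 0) x) = 0 * \<xi> (\<lambda>_. 0) + 0 * \<xi> (\<lambda>_. 0)"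
        by (rule lin[OF zPS zPS])
      then show ?case by simp
    next
      case (Suc n)
      have a: "(\<lambda>\<omega>. \<Sum>i<n. S (\<lambda>t. h t * x i t) \<omega> * y i \<omega>) \<in> PS" using PSn Suc.prems by auto
      have b: "(\<lambda>\<omega>. S (\<lambda>t. h t * x n t) \<omega> * y n \<omega>) \<in> PS" using PS1 SY Suc.prems by auto
      have "\<xi> (\<lambda>\<omega>. 1 * (\<lambda>\<omega>. \<Sum>i<n. S (\<lambda>t. h t * x i t) \<omega> * y i \<omega>) \<omega> + 1 * (\<lambda>\<omega>. S (\<lambda>t. h t * x n t) \<omega> * y n \<omega>) \<omega>)
          = 1 * \<xi> (\<lambda>\<omega>. \<Sum>i<n. S (\<lambda>t. h t * x i t) \<omega> * y i \<omega>) + 1 * \<xi> (\<lambda>\<omega>. S (\<lambda>t. h t * x n t) \<omega> * y n \<omega>)"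
        by (rule lin[OF a b])
      then show ?case using Suc eq[of "x n" "y n"] by simp
    qed
    show ?A
    proof (intro exI[of _ "max K 1"] conjI allI impI)
      show "0 < max K 1" by simp
      fix n :: nat and x :: "nat \<Rightarrow> 'a \<Rightarrow> real" and y :: "nat \<Rightarrow> 'b \<Rightarrow> real"
      assume x: "\<forall>i<n. x i \<in> X1" and y: "\<forall>i<n. y i \<in> kothe N Y1"
      have y': "\<forall>i<n. y i \<in> K1" using y unfolding K1_def .
      have P: "(\<lambda>\<omega>. \<Sum>i<n. S (\<lambda>t. h t * x i t) \<omega> * y i \<omega>) \<in> PS" using PSn[OF x y'] .
      have "(\<Sum>i<n. \<integral>\<omega>. T (x i) \<omega> * y i \<omega> \<partial>N) \<le> K * pn (\<lambda>\<omega>. \<Sum>i<n. S (\<lambda>t. h t * x i t) \<omega> * y i \<omega>)"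
        using K[OF P] xisum[OF x y'] by simp
      also have "\<dots> \<le> max K 1 * pn (\<lambda>\<omega>. \<Sum>i<n. S (\<lambda>t. h t * x i t) \<omega> * y i \<omega>)"
        using pn_nonneg[OF P] by (intro mult_right_mono) auto
      finally show "(\<Sum>i<n. \<integral>\<omega>. T (x i) \<omega> * y i \<omega> \<partial>N)
              \<le> max K 1 * pi_norm N Y2 nY2 (kothe N Y1) (kothe_norm N Y1 nY1)
                     (\<lambda>\<omega>. \<Sum>i<n. S (\<lambda>t. h t * x i t) \<omega> * y i \<omega>)" unfolding K1_def nK_def .
    qed
  next
    assume ?A
    then obtain C where C: "C > 0" and P: "\<And>(n::nat) (x::nat \<Rightarrow> 'a \<Rightarrow> real) (y::nat \<Rightarrow> 'b \<Rightarrow> real). \<forall>i<n. x i \<in> X1 \<Longrightarrow> \<forall>i<n. y i \<in> K1 \<Longrightarrow>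
            (\<Sum>i<n. \<integral>\<omega>. T (x i) \<omega> * y i \<omega> \<partial>N)
              \<le> C * pn (\<lambda>\<omega>. \<Sum>i<n. S (\<lambda>t. h t * x i t) \<omega> * y i \<omega>)"
      unfolding K1_def nK_def by blast
    define G0 where "G0 = {((\<lambda>\<omega>. \<Sum>i<n. S (\<lambda>t. h t * x i t) \<omega> * y i \<omega>), (\<Sum>i<n. \<integral>\<omega>. T (x i) \<omega> * y i \<omega> \<partial>N))
       | (n::nat) x y. (\<forall>i<n. x i \<in> X1) \<and> (\<forall>i<n. y i \<in> K1)}"
    have Kscale: "(\<lambda>\<omega>. c * g \<omega>) \<in> K1" if "g \<in> K1" for g c
    proof -
      have "g \<in> borel_measurable N \<and> (\<forall>f\<in>Y1. integrable N (\<lambda>x. g x * f x))" using kothe_mem that K1_def by blast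
      then show ?thesis unfolding K1_def kothe_def ydual_def L1set_def
        by (auto simp: mult.assoc intro!: integrable_mult_right)
    qed
    have G0lin: "((\<lambda>\<omega>. \<alpha> * u \<omega> + \<beta> * u' \<omega>), \<alpha> * v + \<beta> * v') \<in> G0"
      if uv: "(u,v)\<in>G0" "(u',v')\<in>G0" for u v u' v' \<alpha> \<beta>
    proof -
      obtain n :: nat and x y where 1: "u = (\<lambda>\<omega>. \<Sum>i<n. S (\<lambda>t. h t * x i t) \<omega> * y i \<omega>)" "v = (\<Sum>i<n. \<integral>\<omega>. T (x i) \<omega> * y i \<omega> \<partial>N)"
          "\<forall>i<n. x i \<in> X1" "\<forall>i<n. y i \<in> K1"
        using uv(1) unfolding G0_def by blast
      obtain m :: nat and x' y' where 2: "u' = (\<lambda>\<omega>. \<Sum>i<m. S (\<lambda>t. h t * x' i t) \<omega> * y' i \<omega>)" "v' = (\<Sum>i<m. \<integral>\<omega>. T (x' i) \<omega> * y' i \<omega> \<partial>N)"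
          "\<forall>i<m. x' i \<in> X1" "\<forall>i<m. y' i \<in> K1"
        using uv(2) unfolding G0_def by blast
      define X where "X i = (if i < n then x i else x' (i - n))" for i
      define Yv where "Yv i = (if i < n then (\<lambda>\<omega>. \<alpha> * y i \<omega>) else (\<lambda>\<omega>. \<beta> * y' (i - n) \<omega>))" for i
      have c1: "\<forall>i<n+m. X i \<in> X1" using 1 2 unfolding X_def by auto
      have c2: "\<forall>i<n+m. Yv i \<in> K1" using 1 2 Kscale unfolding Yv_def by auto
      have e1: "(\<lambda>\<omega>. \<Sum>i<n+m. S (\<lambda>t. h t * X i t) \<omega> * Yv i \<omega>) = (\<lambda>\<omega>. \<alpha> * u \<omega> + \<beta> * u' \<omega>)"
      proof
        fix \<omega>
        show "(\<Sum>i<n+m. S (\<lambda>t. h t * X i t) \<omega> * Yv i \<omega>) = \<alpha> * u \<omega> + \<beta> * u' \<omega>"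
          unfolding sum_split_nat 1 2 X_def Yv_def by (simp add: sum_distrib_left algebra_simps)
      qed
      have e2: "(\<Sum>i<n+m. \<integral>\<omega>. T (X i) \<omega> * Yv i \<omega> \<partial>N) = \<alpha> * v + \<beta> * v'"
      proof -
        have "(\<integral>\<omega>. T (x i) \<omega> * (\<alpha> * y i \<omega>) \<partial>N) = \<alpha> * (\<integral>\<omega>. T (x i) \<omega> * y i \<omega> \<partial>N)" for i
          by (simp add: mult.left_commute[of _ \<alpha>])
        moreover have "(\<integral>\<omega>. T (x' i) \<omega> * (\<beta> * y' i \<omega>) \<partial>N) = \<beta> * (\<integral>\<omega>. T (x' i) \<omega> * y' i \<omega> \<partial>N)" for i
          by (simp add: mult.left_commute[of _ \<beta>])
        ultimately show ?thesis
          unfolding sum_split_nat 1 2 X_def Yv_def by (simp add: sum_distrib_left)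
      qed
      show ?thesis unfolding G0_def using c1 c2 e1[symmetric] e2[symmetric] by blast
    qed
    have G0dom: "v \<le> C * pn u" if "(u,v)\<in>G0" for u v
      using that P unfolding G0_def by blast
    have lg: "lingraph PS (\<lambda>u. C * pn u) G0"
      unfolding lingraph_def
    proof (intro conjI allI impI)
      show "G0 \<subseteq> PS \<times> UNIV" unfolding G0_def using PSn by blast
show "((\<lambda>_. 0), 0) \<in> G0" unfolding G0_def by (auto intro!: exI[of _ "0::nat"])
    next
      fix f a g b \<alpha> \<beta> assume "(f,a)\<in>G0" "(g,b)\<in>G0"
      then show "((\<lambda>x. \<alpha>*f x + \<beta>*g x), \<alpha>*a+\<beta>*b) \<in> G0" by (rule G0lin)
    next
      fix f a b assume fa: "(f,a)\<in>G0" and fb: "(f,b)\<in>G0"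
      have z: "(\<lambda>\<omega>. 1 * f \<omega> + (-1) * f \<omega>) = (\<lambda>_. 0)" by auto
      have "1 * a + (-1) * b \<le> 0" using G0dom[OF G0lin[OF fa fb, of 1 "-1"]] unfolding z pn_zero by simp
      moreover have "1 * b + (-1) * a \<le> 0" using G0dom[OF G0lin[OF fb fa, of 1 "-1"]] unfolding z pn_zero by simp
      ultimately show "a = b" by simp
    next
      fix f a assume "(f,a)\<in>G0" then show "a \<le> C * pn f" by (rule G0dom)
    qed
    have "\<exists>\<xi>. (\<forall>f\<in>PS. \<forall>g\<in>PS. \<forall>a b. \<xi> (\<lambda>x. a*f x + b*g x) = a*\<xi> f + b*\<xi> g)
           \<and> (\<forall>f\<in>PS. \<xi> f \<le> C * pn f) \<and> (\<forall>f a. (f,a)\<in>G0 \<longrightarrow> \<xi> f = a)"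
    proof (rule hahn_banach[OF _ _ _ lg])
      show "\<And>f g a b. f\<in>PS \<Longrightarrow> g\<in>PS \<Longrightarrow> (\<lambda>x. a*f x + b*g x) \<in> PS" by (rule PS_lin)
      show "\<And>f g. f\<in>PS \<Longrightarrow> g\<in>PS \<Longrightarrow> C * pn (\<lambda>x. f x + g x) \<le> C * pn f + C * pn g"
        using pn_add C by (simp add: distrib_left[symmetric])
      show "\<And>f c. f\<in>PS \<Longrightarrow> c \<ge> 0 \<Longrightarrow> C * pn (\<lambda>x. c * f x) = c * (C * pn f)"
        using pn_hom by simp
    qed
    then obtain \<xi> where lin: "\<And>f g a b. f\<in>PS \<Longrightarrow> g\<in>PS \<Longrightarrow> \<xi> (\<lambda>x. a*f x + b*g x) = a*\<xi> f + b*\<xi> g"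
      and dom: "\<And>f. f\<in>PS \<Longrightarrow> \<xi> f \<le> C * pn f" and ext: "\<And>f a. (f,a)\<in>G0 \<Longrightarrow> \<xi> f = a" by blast
    have absb: "\<bar>\<xi> f\<bar> \<le> C * pn f" if f: "f \<in> PS" for f
    proof -
      have "\<xi> (\<lambda>x. (-1) * f x + 0 * f x) = (-1) * \<xi> f + 0 * \<xi> f" by (rule lin[OF f f])
      then have "- \<xi> f = \<xi> (\<lambda>x. (-1) * f x)" by simp
      also have "\<dots> \<le> C * pn (\<lambda>x. (-1) * f x)" using dom PS_lin[OF f f, of "-1" 0] by simp
      also have "\<dots> \<le> C * (\<bar>-1\<bar> * pn f)" using pn_scale_le[OF f, of "-1"] C by (intro mult_left_mono) auto
      finally show ?thesis using dom[OF f] by simp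
    qed
    show ?B
    proof (intro exI conjI ballI)
      show "pi_dual N Y2 nY2 (kothe N Y1) (kothe_norm N Y1 nY1) \<xi>"
        unfolding pi_dual_def K1_def[symmetric] nK_def[symmetric] using lin absb by blast
    next
      fix x y assume x: "x \<in> X1" and y: "y \<in> kothe N Y1"
      have "((\<lambda>\<omega>. \<Sum>i<Suc 0. S (\<lambda>t. h t * (\<lambda>_. x) i t) \<omega> * (\<lambda>_. y) i \<omega>), (\<Sum>i<Suc 0. \<integral>\<omega>. T ((\<lambda>_. x) i) \<omega> * (\<lambda>_. y) i \<omega> \<partial>N)) \<in> G0"
        unfolding G0_def mem_Collect_eq
        by (rule exI[of _ "Suc 0"], rule exI[of _ "\<lambda>_. x"], rule exI[of _ "\<lambda>_. y"]) (use x y K1_def in auto)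
      from ext[OF this] show "(\<integral>\<omega>. T x \<omega> * y \<omega> \<partial>N) = \<xi> (\<lambda>\<omega>. S (\<lambda>t. h t * x t) \<omega> * y \<omega>)" by simp
    qed
  qed
qed

end
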